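(* At every point $R\in V_N$ with $q(R)>0$, the Cartan tensor $C_{pqr}=\frac12\partial g_{pq}/\partial R^r$ of the Finsleroid metric function satisfies $$C_tC^t=\frac{N^2}{4K^2}\,g^2,$$ and, if $g\neq0$, $$C_{pqr}=\frac1N\Big(h_{pq}C_r+h_{pr}C_q+h_{qr}C_p-\frac{1}{C_sC^s}C_pC_qC_r\Big).$$
   Context: Let $N\ge2$, $V_N=\mathbb{R}^N$ with points $R=(R^1,\dots,R^N)$, $Z=R^N$; indices $a,b$ run over $1,\dots,N-1$, indices $p,q,r,s,t$ over $1,\dots,N$, repeated indices summed. Fix a symmetric positive-definite matrix $(r_{ab})$, $q(R)=\sqrt{r_{ab}R^aR^b}$. Fix $g\in(-2,2)$, $h=\sqrt{1-g^2/4}$, $G=g/h$. Define $B(g;R)=Z^2+gqZ+q^2$, $A(g;R)=Z+\frac12gq$, $\Phi(g;R)=\arctan(A/(hq))$ for $q>0$ ($\Phi=\pm\pi/2$ if $q=0$, $Z\gtrless0$), $J=e^{\frac12G\Phi}$, and $K(g;R)=\sqrt{B}\,J$. Let $g_{pq}=\frac12\partial^2K^2/\partial R^p\partial R^q$ with inverse $g^{pq}$, $R_p=\frac12\partial K^2/\partial R^p$, angular metric tensor $h_{pq}=g_{pq}-R_pR_q/K^2$, $C_p=g^{qr}C_{pqr}$, $C^p=g^{pq}C_q$. *)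

theory Defs
  imports "HOL-Analysis.Analysis"
begin

text \<open>Points of V_N are vectors R :: real^'n with N = CARD('n). A distinguished index
  z :: 'n plays the role of the last coordinate Z = R^N; the remaining indices play the
  role of a, b = 1..N-1. The matrix (r_ab) is rr :: 'n => 'n => real (only its entries
  with a, b ~= z matter). gg is the Finsleroid parameter g.\<close>

definition qf :: "('n::finite \<Rightarrow> 'n \<Rightarrow> real) \<Rightarrow> 'n \<Rightarrow> real^'n \<Rightarrow> real" where
  "qf rr z R = sqrt (\<Sum>a\<in>UNIV - {z}. \<Sum>b\<in>UNIV - {z}. rr a b * R$a * R$b)"

definition hh :: "real \<Rightarrow> real" where
  "hh gg = sqrt (1 - gg^2 / 4)"

definition GG :: "real \<Rightarrow> real" where
  "GG gg = gg / hh gg"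

definition Bf :: "('n::finite \<Rightarrow> 'n \<Rightarrow> real) \<Rightarrow> 'n \<Rightarrow> real \<Rightarrow> real^'n \<Rightarrow> real" where
  "Bf rr z gg R = (R$z)^2 + gg * qf rr z R * R$z + (qf rr z R)^2"

definition Af :: "('n::finite \<Rightarrow> 'n \<Rightarrow> real) \<Rightarrow> 'n \<Rightarrow> real \<Rightarrow> real^'n \<Rightarrow> real" where
  "Af rr z gg R = R$z + 1/2 * gg * qf rr z R"

definition Phif :: "('n::finite \<Rightarrow> 'n \<Rightarrow> real) \<Rightarrow> 'n \<Rightarrow> real \<Rightarrow> real^'n \<Rightarrow> real" where
  "Phif rr z gg R =
     (if qf rr z R > 0 then arctan (Af rr z gg R / (hh gg * qf rr z R))
      else if R$z > 0 then pi/2 else - pi/2)"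

definition Jf :: "('n::finite \<Rightarrow> 'n \<Rightarrow> real) \<Rightarrow> 'n \<Rightarrow> real \<Rightarrow> real^'n \<Rightarrow> real" where
  "Jf rr z gg R = exp (1/2 * GG gg * Phif rr z gg R)"

definition Kf :: "('n::finite \<Rightarrow> 'n \<Rightarrow> real) \<Rightarrow> 'n \<Rightarrow> real \<Rightarrow> real^'n \<Rightarrow> real" where
  "Kf rr z gg R = sqrt (Bf rr z gg R) * Jf rr z gg R"

definition partial :: "(real^'n::finite \<Rightarrow> real) \<Rightarrow> 'n \<Rightarrow> real^'n \<Rightarrow> real" where
  "partial f p R = deriv (\<lambda>t. f (R + t *\<^sub>R axis p 1)) 0"

definition metric :: "('n::finite \<Rightarrow> 'n \<Rightarrow> real) \<Rightarrow> 'n \<Rightarrow> real \<Rightarrow> 'n \<Rightarrow> 'n \<Rightarrow> real^'n \<Rightarrow> real" where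
  "metric rr z gg p q R =
     1/2 * partial (\<lambda>S. partial (\<lambda>T. (Kf rr z gg T)^2) q S) p R"

definition gmat :: "('n::finite \<Rightarrow> 'n \<Rightarrow> real) \<Rightarrow> 'n \<Rightarrow> real \<Rightarrow> real^'n \<Rightarrow> real^'n^'n" where
  "gmat rr z gg R = (\<chi> p q. metric rr z gg p q R)"

definition ginv :: "('n::finite \<Rightarrow> 'n \<Rightarrow> real) \<Rightarrow> 'n \<Rightarrow> real \<Rightarrow> real^'n \<Rightarrow> real^'n^'n" where
  "ginv rr z gg R = matrix_inv (gmat rr z gg R)"

definition Rlow :: "('n::finite \<Rightarrow> 'n \<Rightarrow> real) \<Rightarrow> 'n \<Rightarrow> real \<Rightarrow> 'n \<Rightarrow> real^'n \<Rightarrow> real" where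
  "Rlow rr z gg p R = 1/2 * partial (\<lambda>T. (Kf rr z gg T)^2) p R"

definition angular :: "('n::finite \<Rightarrow> 'n \<Rightarrow> real) \<Rightarrow> 'n \<Rightarrow> real \<Rightarrow> 'n \<Rightarrow> 'n \<Rightarrow> real^'n \<Rightarrow> real" where
  "angular rr z gg p q R =
     metric rr z gg p q R - Rlow rr z gg p R * Rlow rr z gg q R / (Kf rr z gg R)^2"

definition cartan :: "('n::finite \<Rightarrow> 'n \<Rightarrow> real) \<Rightarrow> 'n \<Rightarrow> real \<Rightarrow> 'n \<Rightarrow> 'n \<Rightarrow> 'n \<Rightarrow> real^'n \<Rightarrow> real" where
  "cartan rr z gg p q r R = 1/2 * partial (\<lambda>S. metric rr z gg p q S) r R"

definition Clow :: "('n::finite \<Rightarrow> 'n \<Rightarrow> real) \<Rightarrow> 'n \<Rightarrow> real \<Rightarrow> 'n \<Rightarrow> real^'n \<Rightarrow> real" where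
  "Clow rr z gg p R = (\<Sum>q\<in>UNIV. \<Sum>r\<in>UNIV. ginv rr z gg R $ q $ r * cartan rr z gg p q r R)"

definition Cup :: "('n::finite \<Rightarrow> 'n \<Rightarrow> real) \<Rightarrow> 'n \<Rightarrow> real \<Rightarrow> 'n \<Rightarrow> real^'n \<Rightarrow> real" where
  "Cup rr z gg p R = (\<Sum>q\<in>UNIV. ginv rr z gg R $ p $ q * Clow rr z gg q R)"

end

theory Submission
  imports Defs
begin

definition ee :: "'n \<Rightarrow> 'n \<Rightarrow> real" where "ee z p = (if p = z then 1 else 0)"
definition rt :: "('n \<Rightarrow> 'n \<Rightarrow> real) \<Rightarrow> 'n \<Rightarrow> 'n \<Rightarrow> 'n \<Rightarrow> real" where
  "rt rr z p q = (if p = z \<or> q = z then 0 else rr p q)"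
definition QQ :: "('n::finite \<Rightarrow> 'n \<Rightarrow> real) \<Rightarrow> 'n \<Rightarrow> real^'n \<Rightarrow> real" where
  "QQ rr z T = (\<Sum>a\<in>UNIV - {z}. \<Sum>b\<in>UNIV - {z}. rr a b * T$a * T$b)"
definition ww :: "('n::finite \<Rightarrow> 'n \<Rightarrow> real) \<Rightarrow> 'n \<Rightarrow> real^'n \<Rightarrow> 'n \<Rightarrow> real" where
  "ww rr z T p = (if p = z then 0 else \<Sum>b\<in>UNIV - {z}. rr p b * T$b)"

lemma partial_at:
  assumes "eventually (\<lambda>t. f (S + t *\<^sub>R axis p 1) = F t) (nhds 0)"
    and "(F has_real_derivative D) (at 0)"
  shows "partial f p S = D"
proof -
  have "((\<lambda>t. f (S + t *\<^sub>R axis p 1)) has_real_derivative D) (at 0)"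
    using DERIV_cong_ev[OF refl assms(1) refl] assms(2) by simp
  thus ?thesis unfolding partial_def by (rule DERIV_imp_deriv)
qed

lemma line_comp: "(S + t *\<^sub>R axis r 1) $ a = S$a + t * (if a = r then 1 else 0)"
  by (simp add: axis_def)

lemma QQ_line:
  fixes rr :: "'n::finite \<Rightarrow> 'n \<Rightarrow> real"
  assumes sym: "\<forall>a\<in>UNIV - {z}. \<forall>b\<in>UNIV - {z}. rr a b = rr b a"
  shows "QQ rr z (S + t *\<^sub>R axis r 1) = QQ rr z S + 2 * t * ww rr z S r + t^2 * rt rr z r r"
proof (cases "r = z")
  case True
  then show ?thesis unfolding QQ_def ww_def rt_def line_comp by (auto intro!: sum.cong)
next
  case False
  have e: "rr a b * (S$a + t * (if a = r then 1 else 0)) * (S$b + t * (if b = r then 1 else 0))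
     = rr a b * S$a * S$b + t * ((if a = r then rr r b * S$b else 0) + (if b = r then rr a r * S$a else 0))
       + t^2 * (if a = r \<and> b = r then rr r r else 0)" for a b
    by (auto simp: algebra_simps power2_eq_square)
  have s2: "(\<Sum>a\<in>UNIV - {z}. rr a r * S$a) = (\<Sum>b\<in>UNIV - {z}. rr r b * S$b)"
    using sym False by (intro sum.cong) auto
  have d1: "(\<Sum>a\<in>UNIV - {z}. \<Sum>b\<in>UNIV - {z}. (if a = r then rr r b * S$b else 0))
     = (\<Sum>b\<in>UNIV - {z}. rr r b * S$b)"
  proof -
    have "(\<Sum>a\<in>UNIV - {z}. \<Sum>b\<in>UNIV - {z}. (if a = r then rr r b * S$b else 0))
      = (\<Sum>a\<in>UNIV - {z}. if a = r then (\<Sum>b\<in>UNIV - {z}. rr r b * S$b) else 0)"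
      by (intro sum.cong) auto
    also have "\<dots> = (\<Sum>b\<in>UNIV - {z}. rr r b * S$b)" using False by (simp add: sum.delta')
    finally show ?thesis .
  qed
  have d2: "(\<Sum>a\<in>UNIV - {z}. \<Sum>b\<in>UNIV - {z}. (if b = r then rr a r * S$a else 0))
     = (\<Sum>a\<in>UNIV - {z}. rr a r * S$a)"
    using False by (simp add: sum.delta')
  have d3: "(\<Sum>a\<in>UNIV - {z}. \<Sum>b\<in>UNIV - {z}. (if a = r \<and> b = r then rr r r else 0)) = rr r r"
  proof -
    have "(\<Sum>a\<in>UNIV - {z}. \<Sum>b\<in>UNIV - {z}. (if a = r \<and> b = r then rr r r else 0))
       = (\<Sum>a\<in>UNIV - {z}. if a = r then rr r r else 0)"
      using False by (intro sum.cong) (auto simp: sum.delta')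
    also have "\<dots> = rr r r" using False by (simp add: sum.delta')
    finally show ?thesis .
  qed
  have "QQ rr z (S + t *\<^sub>R axis r 1) = (\<Sum>a\<in>UNIV - {z}. \<Sum>b\<in>UNIV - {z}. rr a b * S$a * S$b
       + t * ((if a = r then rr r b * S$b else 0) + (if b = r then rr a r * S$a else 0))
       + t^2 * (if a = r \<and> b = r then rr r r else 0))"
    unfolding QQ_def line_comp e ..
  also have "\<dots> = QQ rr z S + t * ((\<Sum>a\<in>UNIV - {z}. \<Sum>b\<in>UNIV - {z}. (if a = r then rr r b * S$b else 0))
     + (\<Sum>a\<in>UNIV - {z}. \<Sum>b\<in>UNIV - {z}. (if b = r then rr a r * S$a else 0)))
     + t^2 * (\<Sum>a\<in>UNIV - {z}. \<Sum>b\<in>UNIV - {z}. (if a = r \<and> b = r then rr r r else 0))"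
    unfolding QQ_def by (simp only: sum.distrib flip: sum_distrib_left)
  also have "\<dots> = QQ rr z S + 2 * t * ww rr z S r + t^2 * rt rr z r r"
    unfolding d1 d2 d3 s2 using False by (simp add: ww_def rt_def)
  finally show ?thesis .
qed


definition Ef :: "real \<Rightarrow> real \<Rightarrow> real \<Rightarrow> real" where
  "Ef g Z q = exp (GG g * arctan ((Z + 1/2*g*q) / (hh g * q)))"
definition Bs :: "real \<Rightarrow> real \<Rightarrow> real \<Rightarrow> real" where
  "Bs g Z q = Z^2 + g*q*Z + q^2"

lemma g4: "-2 < g \<Longrightarrow> g < (2::real) \<Longrightarrow> 1 - g^2/4 > 0"
proof -
  assume a: "-2 < g" "g < 2"
  have "0 < (2-g)*(2+g)" using a by (intro mult_pos_pos) auto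
  thus ?thesis by (simp add: power2_eq_square algebra_simps)
qed

lemma hh_pos: "-2 < g \<Longrightarrow> g < 2 \<Longrightarrow> hh g > 0"
  unfolding hh_def using g4 by simp

lemma hh_sq: "-2 < g \<Longrightarrow> g < 2 \<Longrightarrow> (hh g)^2 = 1 - g^2/4"
  unfolding hh_def using g4[of g] by simp

lemma Bs_pos: "-2 < g \<Longrightarrow> g < 2 \<Longrightarrow> q > 0 \<Longrightarrow> Bs g Z q > 0"
proof -
  assume a: "-2 < g" "g < 2" "q > 0"
  have "Bs g Z q = (Z + g*q/2)^2 + (1 - g^2/4) * q^2" unfolding Bs_def by (simp add: power2_eq_square algebra_simps)
  moreover have "1 - g^2/4 > 0" using g4[OF a(1,2)] .
  ultimately show ?thesis using a(3) by (simp add: add_nonneg_pos)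
qed

lemma E_deriv:
  assumes g: "-2 < g" "g < 2"
    and dZ: "(Zt has_real_derivative Z') (at 0)" and dq: "(qt has_real_derivative q') (at 0)"
    and q0: "qt 0 > 0"
  shows "((\<lambda>t. Ef g (Zt t) (qt t)) has_real_derivative
     Ef g (Zt 0) (qt 0) * g * (qt 0 * Z' - Zt 0 * q') / Bs g (Zt 0) (qt 0)) (at 0)"
proof -
  define h where "h = hh g"
  have hp: "h > 0" and hs: "h^2 = 1 - g^2/4" using hh_pos[OF g] hh_sq[OF g] by (auto simp: h_def)
  have Bp: "Bs g (Zt 0) (qt 0) > 0" using Bs_pos[OF g q0] .
  define u where "u t = (Zt t + 1/2*g*qt t) / (h * qt t)" for t
  have du: "(u has_real_derivative (Z' * qt 0 - Zt 0 * q') / (h * (qt 0)^2)) (at 0)"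
    unfolding u_def
    apply (rule derivative_eq_intros dZ dq refl)+
    using hp q0 apply simp
    using hp q0 apply (simp add: field_simps power2_eq_square)
    done
  have u0: "1 + (u 0)^2 = Bs g (Zt 0) (qt 0) / (h^2 * (qt 0)^2)"
  proof -
    have "1 + (u 0)^2 = (h^2 * (qt 0)^2 + (Zt 0 + 1/2*g*qt 0)^2) / (h^2 * (qt 0)^2)"
      unfolding u_def using hp q0 by (simp add: field_simps power2_eq_square)
    also have "h^2 * (qt 0)^2 + (Zt 0 + 1/2*g*qt 0)^2 = Bs g (Zt 0) (qt 0)"
      unfolding hs Bs_def by (simp add: field_simps power2_eq_square)
    finally show ?thesis .
  qed
  have "((\<lambda>t. exp (GG g * arctan (u t))) has_real_derivative
      exp (GG g * arctan (u 0)) * (GG g * (inverse (1 + (u 0)^2) * ((Z' * qt 0 - Zt 0 * q') / (h * (qt 0)^2))))) (at 0)"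
    apply (rule du derivative_eq_intros refl)+
    by simp
  moreover have "exp (GG g * arctan (u 0)) * (GG g * (inverse (1 + (u 0)^2) * ((Z' * qt 0 - Zt 0 * q') / (h * (qt 0)^2))))
     = Ef g (Zt 0) (qt 0) * g * (qt 0 * Z' - Zt 0 * q') / Bs g (Zt 0) (qt 0)"
    unfolding u0 unfolding Ef_def u_def GG_def h_def[symmetric] using hp q0 Bp
    by (simp add: field_simps power2_eq_square)
  ultimately show ?thesis unfolding Ef_def u_def h_def by simp
qed


definition K2s where "K2s g Z q = Bs g Z q * Ef g Z q"
definition Rls where "Rls g Z q w e = Ef g Z q * (w + (Z + g*q)*e)"
definition gs where "gs g Z q wp wq ep eq rpq = Ef g Z q * (rpq + ep*eq + g/(q*Bs g Z q) *
   (-Z*wp*wq + q^2*(wp*eq + ep*wq) + q^2*(Z+g*q)*ep*eq))"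
definition gam where "gam g Z q w e = g/(q*Bs g Z q) * (q^2*e - Z*w)"
definition hs where "hs g Z q wp wq ep eq rpq = gs g Z q wp wq ep eq rpq - Rls g Z q wp ep * Rls g Z q wq eq / K2s g Z q"
definition Cs where "Cs g Z q wp wq wr ep eq er rpq rpr rqr = 1/2 * (hs g Z q wp wq ep eq rpq * gam g Z q wr er
   + hs g Z q wp wr ep er rpr * gam g Z q wq eq + hs g Z q wq wr eq er rqr * gam g Z q wp ep
   - Ef g Z q * g / (q^3 * (Bs g Z q)^2) * (q^2*ep - Z*wp) * (q^2*eq - Z*wq) * (q^2*er - Z*wr))"

lemma sqrt_line:
  assumes "q > 0"
  shows "((\<lambda>t. sqrt (q^2 + 2*t*w + t^2*c)) has_real_derivative w / q) (at 0)"
proof -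
  have d: "((\<lambda>t. q^2 + 2*t*w + t^2*c) has_real_derivative 2*w) (at 0)"
    by (rule derivative_eq_intros refl)+ simp
  have "((\<lambda>t. sqrt (q^2 + 2*t*w + t^2*c)) has_real_derivative inverse (sqrt (q^2 + 2*0*w + 0^2*c)) / 2 * (2*w)) (at 0)"
    by (rule DERIV_chain2[OF DERIV_real_sqrt d]) (use assms in simp)
  thus ?thesis using assms by (simp add: field_simps)
qed

lemma E_line:
  assumes g: "-2 < g" "g < 2" and q: "q > 0"
  shows "((\<lambda>t. Ef g (Z + t*e) (sqrt (q^2 + 2*t*w + t^2*c))) has_real_derivative
     Ef g Z q * gam g Z q w e) (at 0)"
proof -
  have dZ: "((\<lambda>t. Z + t*e) has_real_derivative e) (at 0)"
    by (rule derivative_eq_intros refl)+ simp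
  have "((\<lambda>t. Ef g (Z + t*e) (sqrt (q^2 + 2*t*w + t^2*c))) has_real_derivative
     Ef g (Z + 0*e) (sqrt (q^2 + 2*0*w + 0^2*c)) * g * (sqrt (q^2 + 2*0*w + 0^2*c) * e - (Z + 0*e) * (w/q))
       / Bs g (Z + 0*e) (sqrt (q^2 + 2*0*w + 0^2*c))) (at 0)"
    by (rule E_deriv[OF g dZ sqrt_line[OF q]]) (use q in simp)
  moreover have "Ef g (Z + 0*e) (sqrt (q^2 + 2*0*w + 0^2*c)) * g * (sqrt (q^2 + 2*0*w + 0^2*c) * e - (Z + 0*e) * (w/q))
       / Bs g (Z + 0*e) (sqrt (q^2 + 2*0*w + 0^2*c)) = Ef g Z q * gam g Z q w e"
    using q Bs_pos[OF g q, of Z] unfolding gam_def by (simp add: field_simps power2_eq_square)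
  ultimately show ?thesis by simp
qed

lemma Bs_line:
  assumes q: "q > 0"
  shows "((\<lambda>t. Bs g (Z + t*e) (sqrt (q^2 + 2*t*w + t^2*c))) has_real_derivative
     2*Z*e + g*(w/q)*Z + g*q*e + 2*w) (at 0)"
  unfolding Bs_def
  apply (rule sqrt_line[OF q] derivative_eq_intros refl)+
  using q by (simp add: field_simps power2_eq_square)

lemma K2_line:
  assumes g: "-2 < g" "g < 2" and q: "q > 0"
  shows "((\<lambda>t. K2s g (Z + t*e) (sqrt (q^2 + 2*t*w + t^2*c))) has_real_derivative
     2 * Rls g Z q w e) (at 0)"
  unfolding K2s_def
  apply (rule Bs_line[OF q] E_line[OF g q] derivative_eq_intros refl)+
  using q Bs_pos[OF g q, of Z] unfolding Rls_def gam_def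
  by (simp add: field_simps power2_eq_square)


lemma Rl_line:
  assumes g: "-2 < g" "g < 2" and q: "q > 0"
  shows "((\<lambda>t. Rls g (Z + t*e) (sqrt (q^2 + 2*t*w + t^2*c)) (wq + t*a) eq) has_real_derivative
     gs g Z q w wq e eq a) (at 0)"
  unfolding Rls_def
  apply (rule sqrt_line[OF q] E_line[OF g q] derivative_eq_intros refl)+
  using q Bs_pos[OF g q, of Z] unfolding gs_def gam_def
  apply (simp add: field_simps power2_eq_square)
  unfolding Bs_def by algebra

lemma alg_core:
  fixes Z q g B wp wq wr ep eq er apr aqr :: real
  assumes q: "q > 0" and B: "B = Z^2 + g*q*Z + q^2" and Bnz: "B \<noteq> 0"
  defines "Np \<equiv> -Z*wp*wq + q^2*(wp*eq + ep*wq) + q^2*(Z+g*q)*ep*eq"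
  defines "Npr \<equiv> -Z*wp*wr + q^2*(wp*er + ep*wr) + q^2*(Z+g*q)*ep*er"
  defines "Nqr \<equiv> -Z*wq*wr + q^2*(wq*er + eq*wr) + q^2*(Z+g*q)*eq*er"
  defines "N' \<equiv> -er*wp*wq - Z*(apr*wq + wp*aqr) + 2*wr*(wp*eq + ep*wq) + q^2*(apr*eq + ep*aqr)
              + (2*wr*(Z+g*q) + q^2*(er + g*wr/q))*ep*eq"
  defines "B' \<equiv> 2*Z*er + g*(wr/q)*Z + g*q*er + 2*wr"
  defines "k' \<equiv> - g*((wr/q)*B + q*B') / (q*B)^2"
  defines "k \<equiv> g/(q*B)"
  defines "Lp \<equiv> wp + (Z+g*q)*ep" and "Lq \<equiv> wq + (Z+g*q)*eq" and "Lr \<equiv> wr + (Z+g*q)*er"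
  defines "Pp \<equiv> q^2*ep - Z*wp" and "Pq \<equiv> q^2*eq - Z*wq" and "Pr \<equiv> q^2*er - Z*wr"
  shows "k'*Np + k*N' = - (Lp*Lq/B)*(k*Pr) + (apr + ep*er + k*Npr - Lp*Lr/B)*(k*Pq)
      + (aqr + eq*er + k*Nqr - Lq*Lr/B)*(k*Pp) - g/(q^3*B^2)*Pp*Pq*Pr"
  unfolding Np_def Npr_def Nqr_def N'_def B'_def k'_def k_def Lp_def Lq_def Lr_def Pp_def Pq_def Pr_def
  using q Bnz
  apply (simp add: field_simps power2_eq_square power3_eq_cube)
  unfolding B
  by algebra

lemma hs_eq: "-2 < g \<Longrightarrow> g < 2 \<Longrightarrow> q > 0 \<Longrightarrow> hs g Z q wp wq ep eq rpq = Ef g Z q * (rpq + ep*eq + g/(q*Bs g Z q) *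
   (-Z*wp*wq + q^2*(wp*eq + ep*wq) + q^2*(Z+g*q)*ep*eq) - (wp + (Z+g*q)*ep)*(wq + (Z+g*q)*eq)/Bs g Z q)"
  unfolding hs_def gs_def Rls_def K2s_def using Bs_pos[of g q Z]
  by (simp add: field_simps Ef_def)

lemma Cs_eq:
  fixes Z q g wp wq wr ep eq er rpq apr aqr :: real
  assumes g: "-2 < g" "g < 2" and q: "q > 0"
  defines "B \<equiv> Bs g Z q" and "E \<equiv> Ef g Z q"
  defines "Np \<equiv> -Z*wp*wq + q^2*(wp*eq + ep*wq) + q^2*(Z+g*q)*ep*eq"
  defines "Npr \<equiv> -Z*wp*wr + q^2*(wp*er + ep*wr) + q^2*(Z+g*q)*ep*er"
  defines "Nqr \<equiv> -Z*wq*wr + q^2*(wq*er + eq*wr) + q^2*(Z+g*q)*eq*er"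
  defines "N' \<equiv> -er*wp*wq - Z*(apr*wq + wp*aqr) + 2*wr*(wp*eq + ep*wq) + q^2*(apr*eq + ep*aqr)
              + (2*wr*(Z+g*q) + q^2*(er + g*wr/q))*ep*eq"
  defines "B' \<equiv> 2*Z*er + g*(wr/q)*Z + g*q*er + 2*wr"
  defines "k' \<equiv> - g*((wr/q)*B + q*B') / (q*B)^2"
  defines "k \<equiv> g/(q*B)"
  defines "Lp \<equiv> wp + (Z+g*q)*ep" and "Lq \<equiv> wq + (Z+g*q)*eq" and "Lr \<equiv> wr + (Z+g*q)*er"
  defines "Pp \<equiv> q^2*ep - Z*wp" and "Pq \<equiv> q^2*eq - Z*wq" and "Pr \<equiv> q^2*er - Z*wr"
  shows "E*(k*Pr)*(rpq + ep*eq + k*Np) + E*(k'*Np + k*N') = 2 * Cs g Z q wp wq wr ep eq er rpq apr aqr"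
proof -
  have Bnz: "B \<noteq> 0" using Bs_pos[OF g q, of Z] by (simp add: B_def)
  have B: "B = Z^2 + g*q*Z + q^2" by (simp add: B_def Bs_def)
  have A: "k'*Np + k*N' = - (Lp*Lq/B)*(k*Pr) + (apr + ep*er + k*Npr - Lp*Lr/B)*(k*Pq)
      + (aqr + eq*er + k*Nqr - Lq*Lr/B)*(k*Pp) - g/(q^3*B^2)*Pp*Pq*Pr"
    unfolding Np_def Npr_def Nqr_def N'_def B'_def k'_def k_def Lp_def Lq_def Lr_def Pp_def Pq_def Pr_def
    by (rule alg_core[OF q B Bnz])
  have C: "2 * Cs g Z q wp wq wr ep eq er rpq apr aqr =
     E * ((rpq + ep*eq + k*Np - Lp*Lq/B)*(k*Pr) + (apr + ep*er + k*Npr - Lp*Lr/B)*(k*Pq)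
      + (aqr + eq*er + k*Nqr - Lq*Lr/B)*(k*Pp) - g/(q^3*B^2)*Pp*Pq*Pr)"
    unfolding Cs_def hs_eq[OF g q] gam_def B_def[symmetric] E_def[symmetric]
      Np_def Npr_def Nqr_def k_def Lp_def Lq_def Lr_def Pp_def Pq_def Pr_def
    by (simp add: algebra_simps)
  have D: "(k*Pr)*(rpq + ep*eq + k*Np) + (- (Lp*Lq/B)*(k*Pr) + (apr + ep*er + k*Npr - Lp*Lr/B)*(k*Pq)
      + (aqr + eq*er + k*Nqr - Lq*Lr/B)*(k*Pp) - g/(q^3*B^2)*Pp*Pq*Pr) =
      (rpq + ep*eq + k*Np - Lp*Lq/B)*(k*Pr) + (apr + ep*er + k*Npr - Lp*Lr/B)*(k*Pq)
      + (aqr + eq*er + k*Nqr - Lq*Lr/B)*(k*Pp) - g/(q^3*B^2)*Pp*Pq*Pr"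
    by (simp add: algebra_simps)
  have "E*(k*Pr)*(rpq + ep*eq + k*Np) + E*(k'*Np + k*N') = E*((k*Pr)*(rpq + ep*eq + k*Np) + (k'*Np + k*N'))"
    by (simp add: algebra_simps)
  also have "\<dots> = 2 * Cs g Z q wp wq wr ep eq er rpq apr aqr" unfolding A D C ..
  finally show ?thesis .
qed



lemma g_line:
  fixes Z q g wp wq wr ep eq er rpq apr aqr c :: real
  assumes g: "-2 < g" "g < 2" and q: "q > 0"
  shows "((\<lambda>t. gs g (Z + t*er) (sqrt (q^2 + 2*t*wr + t^2*c)) (wp + t*apr) (wq + t*aqr) ep eq rpq) has_real_derivative
     2 * Cs g Z q wp wq wr ep eq er rpq apr aqr) (at 0)"
proof -
  define B where "B = Bs g Z q"
  define Np where "Np = -Z*wp*wq + q^2*(wp*eq + ep*wq) + q^2*(Z+g*q)*ep*eq"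
  define N' where "N' = -er*wp*wq - Z*(apr*wq + wp*aqr) + 2*wr*(wp*eq + ep*wq) + q^2*(apr*eq + ep*aqr)
              + (2*wr*(Z+g*q) + q^2*(er + g*wr/q))*ep*eq"
  define B' where "B' = 2*Z*er + g*(wr/q)*Z + g*q*er + 2*wr"
  define k' where "k' = - g*((wr/q)*B + q*B') / (q*B)^2"
  define k where "k = g/(q*B)"
  have Bnz: "B \<noteq> 0" using Bs_pos[OF g q, of Z] by (simp add: B_def)
  have q0: "sqrt (q^2 + 2*0*wr + 0^2*c) = q" using q by simp
  have dq: "((\<lambda>t. sqrt (q^2 + 2*t*wr + t^2*c)) has_real_derivative wr / q) (at 0)" by (rule sqrt_line[OF q])
  have dB: "((\<lambda>t. Bs g (Z + t*er) (sqrt (q^2 + 2*t*wr + t^2*c))) has_real_derivative B') (at 0)"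
    unfolding B'_def by (rule Bs_line[OF q])
  have dk: "((\<lambda>t. g / (sqrt (q^2 + 2*t*wr + t^2*c) * Bs g (Z + t*er) (sqrt (q^2 + 2*t*wr + t^2*c))))
      has_real_derivative k') (at 0)"
    apply (rule dq dB derivative_eq_intros refl | (use q Bnz in \<open>simp add: q0 B_def[symmetric]\<close>; fail))+
    using q Bnz unfolding k'_def by (simp add: q0 B_def[symmetric] field_simps power2_eq_square)
  have dN: "((\<lambda>t. - (Z + t*er) * (wp + t*apr) * (wq + t*aqr)
      + (sqrt (q^2 + 2*t*wr + t^2*c))^2 * ((wp + t*apr)*eq + ep*(wq + t*aqr))
      + (sqrt (q^2 + 2*t*wr + t^2*c))^2 * ((Z + t*er) + g* sqrt (q^2 + 2*t*wr + t^2*c))*ep*eq)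
      has_real_derivative N') (at 0)"
    apply (rule dq derivative_eq_intros refl)+
    using q unfolding N'_def by (simp add: q0 field_simps power2_eq_square)
  have dM: "((\<lambda>t. rpq + ep*eq + g / (sqrt (q^2 + 2*t*wr + t^2*c) * Bs g (Z + t*er) (sqrt (q^2 + 2*t*wr + t^2*c))) *
      (- (Z + t*er) * (wp + t*apr) * (wq + t*aqr)
      + (sqrt (q^2 + 2*t*wr + t^2*c))^2 * ((wp + t*apr)*eq + ep*(wq + t*aqr))
      + (sqrt (q^2 + 2*t*wr + t^2*c))^2 * ((Z + t*er) + g* sqrt (q^2 + 2*t*wr + t^2*c))*ep*eq))
      has_real_derivative k'*Np + k*N') (at 0)"
    apply (rule dk dN derivative_eq_intros refl)+
    unfolding Np_def k_def B_def using q by (simp add: q0 algebra_simps power2_eq_square)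
  have dE: "((\<lambda>t. Ef g (Z + t*er) (sqrt (q^2 + 2*t*wr + t^2*c))) has_real_derivative Ef g Z q * gam g Z q wr er) (at 0)"
    by (rule E_line[OF g q])
  have M0: "rpq + ep*eq + g / (sqrt (q^2 + 2*0*wr + 0^2*c) * Bs g (Z + 0*er) (sqrt (q^2 + 2*0*wr + 0^2*c))) *
      (- (Z + 0*er) * (wp + 0*apr) * (wq + 0*aqr)
      + (sqrt (q^2 + 2*0*wr + 0^2*c))^2 * ((wp + 0*apr)*eq + ep*(wq + 0*aqr))
      + (sqrt (q^2 + 2*0*wr + 0^2*c))^2 * ((Z + 0*er) + g * sqrt (q^2 + 2*0*wr + 0^2*c))*ep*eq)
      = rpq + ep*eq + k*Np"
    unfolding q0 by (simp add: k_def Np_def B_def)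
  have E0: "Ef g (Z + 0*er) (sqrt (q^2 + 2*0*wr + 0^2*c)) = Ef g Z q" unfolding q0 by simp
  have CE: "Ef g Z q*(k*(q^2*er - Z*wr))*(rpq + ep*eq + k*Np) + Ef g Z q*(k'*Np + k*N')
      = 2 * Cs g Z q wp wq wr ep eq er rpq apr aqr"
    unfolding k_def k'_def Np_def N'_def B'_def B_def by (rule Cs_eq[OF g q])
  have gk: "gam g Z q wr er = k*(q^2*er - Z*wr)" by (simp add: gam_def k_def B_def)
  have "((\<lambda>t. gs g (Z + t*er) (sqrt (q^2 + 2*t*wr + t^2*c)) (wp + t*apr) (wq + t*aqr) ep eq rpq) has_real_derivative
     Ef g Z q * gam g Z q wr er * (rpq + ep*eq + k*Np) + (k'*Np + k*N') * Ef g Z q) (at 0)"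
    unfolding gs_def using DERIV_mult[OF dE dM] by (simp only: M0 E0)
  moreover have "Ef g Z q * gam g Z q wr er * (rpq + ep*eq + k*Np) + (k'*Np + k*N') * Ef g Z q
      = 2 * Cs g Z q wp wq wr ep eq er rpq apr aqr"
    unfolding CE[symmetric] gk by (simp add: algebra_simps)
  ultimately show ?thesis by simp
qed


context
  fixes rr :: "'n::finite \<Rightarrow> 'n \<Rightarrow> real" and z :: 'n and gg :: real
  assumes sym: "\<forall>a\<in>UNIV - {z}. \<forall>b\<in>UNIV - {z}. rr a b = rr b a"
    and g1: "-2 < gg" and g2: "gg < 2"
begin

lemma axis_z: "axis p (1::real) $ z = ee z p"
  by (auto simp: axis_def ee_def)

lemma Lz: "(S + t *\<^sub>R axis r 1) $ z = S$z + t * ee z r"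
  unfolding line_comp ee_def by (cases "r = z") auto

lemma Lw: "ww rr z (S + t *\<^sub>R axis r 1) p = ww rr z S p + t * rt rr z p r"
proof (cases "p = z")
  case True then show ?thesis by (simp add: ww_def rt_def)
next
  case False
  have pw: "rr p b * (S$b + t * (if b = r then 1 else 0)) = rr p b * S$b + t * (if b = r then rr p b else 0)" for b
    by (auto simp: algebra_simps)
  have "(\<Sum>b\<in>UNIV - {z}. rr p b * (S$b + t * (if b = r then 1 else 0)))
      = (\<Sum>b\<in>UNIV - {z}. rr p b * S$b) + t * (\<Sum>b\<in>UNIV - {z}. if b = r then rr p b else 0)"
    unfolding pw by (simp only: sum.distrib sum_distrib_left)
  also have "(\<Sum>b\<in>UNIV - {z}. if b = r then rr p b else 0) = rt rr z p r"
    using False by (simp add: sum.delta' rt_def)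
  finally have X: "(\<Sum>b\<in>UNIV - {z}. rr p b * (S$b + t * (if b = r then 1 else 0)))
      = (\<Sum>b\<in>UNIV - {z}. rr p b * S$b) + t * rt rr z p r" .
  have Y: "ww rr z (S + t *\<^sub>R axis r 1) p = (\<Sum>b\<in>UNIV - {z}. rr p b * (S$b + t * (if b = r then 1 else 0)))"
    unfolding ww_def line_comp by (rule if_not_P[OF False])
  have W: "ww rr z S p = (\<Sum>b\<in>UNIV - {z}. rr p b * S$b)"
    unfolding ww_def by (rule if_not_P[OF False])
  show ?thesis unfolding Y W X ..
qed

lemma qf_QQ: "qf rr z T = sqrt (QQ rr z T)"
  unfolding qf_def QQ_def ..

lemma QQ_nonneg_pos: "qf rr z S > 0 \<Longrightarrow> QQ rr z S > 0"
  unfolding qf_QQ by simp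

lemma Lq: assumes "qf rr z S > 0"
  shows "qf rr z (S + t *\<^sub>R axis r 1) = sqrt ((qf rr z S)^2 + 2*t*ww rr z S r + t^2 * rt rr z r r)"
proof -
  have "(qf rr z S)^2 = QQ rr z S" using QQ_nonneg_pos[OF assms] unfolding qf_QQ by simp
  thus ?thesis unfolding qf_QQ[of "S + t *\<^sub>R axis r 1"] QQ_line[OF sym, of S t r] by simp
qed

lemma EV: assumes "qf rr z S > 0"
  shows "eventually (\<lambda>t. qf rr z (S + t *\<^sub>R axis r 1) > 0) (nhds 0)"
proof -
  have c: "continuous (at 0) (\<lambda>t. sqrt ((qf rr z S)^2 + 2*t*ww rr z S r + t^2 * rt rr z r r))"
    by (intro continuous_intros)
  define f where "f t = sqrt ((qf rr z S)^2 + 2*t*ww rr z S r + t^2 * rt rr z r r)" for t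
  have f0: "f 0 = qf rr z S" using assms by (simp add: f_def)
  have "(f \<longlongrightarrow> f 0) (at 0)" using c unfolding continuous_at f_def by simp
  hence "eventually (\<lambda>t. f t > 0) (at 0)" using assms f0 by (intro order_tendstoD(1)) auto
  hence "eventually (\<lambda>t. f t > 0) (nhds 0)" using assms f0
    unfolding eventually_at_filter by (auto elim!: eventually_mono)
  thus ?thesis by (rule eventually_mono) (use Lq[OF assms] in \<open>simp add: f_def\<close>)
qed

lemma K2_eq: assumes "qf rr z T > 0"
  shows "(Kf rr z gg T)^2 = K2s gg (T$z) (qf rr z T)"
proof -
  have "Bf rr z gg T \<ge> 0" using Bs_pos[OF g1 g2 assms, of "T$z"] by (simp add: Bf_def Bs_def)
  moreover have "(Jf rr z gg T)^2 = Ef gg (T$z) (qf rr z T)"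
    unfolding Jf_def Ef_def Phif_def Af_def using assms
    by (simp add: power2_eq_square exp_add[symmetric])
  ultimately show ?thesis unfolding Kf_def K2s_def
    by (simp add: power_mult_distrib Bf_def Bs_def)
qed

lemma level1: assumes "qf rr z T > 0"
  shows "partial (\<lambda>T. (Kf rr z gg T)^2) p T = 2 * Rls gg (T$z) (qf rr z T) (ww rr z T p) (ee z p)"
proof (rule partial_at)
  show "eventually (\<lambda>t. (Kf rr z gg (T + t *\<^sub>R axis p 1))^2 =
     K2s gg (T$z + t * ee z p) (sqrt ((qf rr z T)^2 + 2*t*ww rr z T p + t^2 * rt rr z p p))) (nhds 0)"
    using EV[OF assms, of p] by (rule eventually_mono) (simp add: K2_eq Lz Lq[OF assms] axis_z)
  show "((\<lambda>t. K2s gg (T$z + t * ee z p) (sqrt ((qf rr z T)^2 + 2*t*ww rr z T p + t^2 * rt rr z p p)))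
     has_real_derivative 2 * Rls gg (T$z) (qf rr z T) (ww rr z T p) (ee z p)) (at 0)"
    by (rule K2_line[OF g1 g2 assms])
qed

lemma level2: assumes "qf rr z T > 0"
  shows "metric rr z gg p q T = gs gg (T$z) (qf rr z T) (ww rr z T p) (ww rr z T q) (ee z p) (ee z q) (rt rr z q p)"
proof -
  have "partial (\<lambda>S. partial (\<lambda>T. (Kf rr z gg T)^2) q S) p T
     = 2 * gs gg (T$z) (qf rr z T) (ww rr z T p) (ww rr z T q) (ee z p) (ee z q) (rt rr z q p)"
  proof (rule partial_at)
    show "eventually (\<lambda>t. partial (\<lambda>T. (Kf rr z gg T)^2) q (T + t *\<^sub>R axis p 1) =
       2 * Rls gg (T$z + t * ee z p) (sqrt ((qf rr z T)^2 + 2*t*ww rr z T p + t^2 * rt rr z p p))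
         (ww rr z T q + t * rt rr z q p) (ee z q)) (nhds 0)"
      using EV[OF assms, of p] by (rule eventually_mono) (simp add: level1 Lz Lw Lq[OF assms] axis_z)
    show "((\<lambda>t. 2 * Rls gg (T$z + t * ee z p) (sqrt ((qf rr z T)^2 + 2*t*ww rr z T p + t^2 * rt rr z p p))
         (ww rr z T q + t * rt rr z q p) (ee z q))
     has_real_derivative 2 * gs gg (T$z) (qf rr z T) (ww rr z T p) (ww rr z T q) (ee z p) (ee z q) (rt rr z q p)) (at 0)"
      by (intro DERIV_cmult Rl_line[OF g1 g2 assms])
  qed
  thus ?thesis unfolding metric_def by simp
qed

lemma level3: assumes "qf rr z T > 0"
  shows "cartan rr z gg p q r T = Cs gg (T$z) (qf rr z T) (ww rr z T p) (ww rr z T q) (ww rr z T r)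
     (ee z p) (ee z q) (ee z r) (rt rr z q p) (rt rr z p r) (rt rr z q r)"
proof -
  have "partial (\<lambda>S. metric rr z gg p q S) r T
     = 2 * Cs gg (T$z) (qf rr z T) (ww rr z T p) (ww rr z T q) (ww rr z T r)
     (ee z p) (ee z q) (ee z r) (rt rr z q p) (rt rr z p r) (rt rr z q r)"
  proof (rule partial_at)
    show "eventually (\<lambda>t. metric rr z gg p q (T + t *\<^sub>R axis r 1) =
       gs gg (T$z + t * ee z r) (sqrt ((qf rr z T)^2 + 2*t*ww rr z T r + t^2 * rt rr z r r))
         (ww rr z T p + t * rt rr z p r) (ww rr z T q + t * rt rr z q r) (ee z p) (ee z q) (rt rr z q p)) (nhds 0)"
      using EV[OF assms, of r] by (rule eventually_mono) (simp add: level2 Lz Lw Lq[OF assms] axis_z)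
    show "((\<lambda>t. gs gg (T$z + t * ee z r) (sqrt ((qf rr z T)^2 + 2*t*ww rr z T r + t^2 * rt rr z r r))
         (ww rr z T p + t * rt rr z p r) (ww rr z T q + t * rt rr z q r) (ee z p) (ee z q) (rt rr z q p))
     has_real_derivative 2 * Cs gg (T$z) (qf rr z T) (ww rr z T p) (ww rr z T q) (ww rr z T r)
     (ee z p) (ee z q) (ee z r) (rt rr z q p) (rt rr z p r) (rt rr z q r)) (at 0)"
      by (rule g_line[OF g1 g2 assms])
  qed
  thus ?thesis unfolding cartan_def by simp
qed

end


lemma rt_sym: "\<forall>a\<in>UNIV - {z}. \<forall>b\<in>UNIV - {z}. rr a b = rr b a \<Longrightarrow> rt rr z q p = rt rr z p q"
  unfolding rt_def by auto

lemma sum_rt: "(\<Sum>q\<in>UNIV. rt rr z p q * x$q) = ww rr z x p"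
proof (cases "p = z")
  case True thus ?thesis by (simp add: rt_def ww_def)
next
  case False
  have "(\<Sum>q\<in>UNIV. rt rr z p q * x$q) = (\<Sum>q\<in>UNIV - {z}. rt rr z p q * x$q) + rt rr z p z * x$z"
    by (simp add: sum.remove[of UNIV z] add.commute)
  also have "\<dots> = (\<Sum>q\<in>UNIV - {z}. rr p q * x$q)" using False by (simp add: rt_def)
  finally show ?thesis using False by (simp add: ww_def)
qed

lemma sum_e: "(\<Sum>q\<in>UNIV. ee z q * (x$q::real)) = x$z"
proof -
  have "(\<Sum>q\<in>UNIV. ee z q * (x$q::real)) = (\<Sum>q\<in>UNIV. if q = z then x$q else 0)"
    by (rule sum.cong) (auto simp: ee_def)
  thus ?thesis by simp
qed

lemma ww_z: "ww rr z x z = 0" by (simp add: ww_def)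

lemma sum_we: "(\<Sum>q\<in>UNIV. ww rr z x q * ee z q) = 0"
  by (simp add: ee_def ww_z if_distrib cong: if_cong)

lemma sum_wR: "(\<Sum>q\<in>UNIV. ww rr z x q * x$q) = QQ rr z x"
proof -
  have "(\<Sum>q\<in>UNIV. ww rr z x q * x$q) = (\<Sum>q\<in>UNIV - {z}. ww rr z x q * x$q) + ww rr z x z * x$z"
    by (simp add: sum.remove[of UNIV z] add.commute)
  also have "\<dots> = (\<Sum>q\<in>UNIV - {z}. (\<Sum>b\<in>UNIV - {z}. rr q b * x$b) * x$q)" by (simp add: ww_def)
  also have "\<dots> = QQ rr z x" unfolding QQ_def
    by (intro sum.cong refl) (auto simp: sum_distrib_right intro!: sum.cong)
  finally show ?thesis .
qed


definition evec :: "'n::finite \<Rightarrow> real^'n" where "evec z = (\<chi> q. ee z q)"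

lemma evec_nth [simp]: "evec z $ q = ee z q" by (simp add: evec_def)

lemma ww_evec: "ww rr z (evec z) p = 0"
  unfolding ww_def evec_def ee_def by auto

lemma ww_lin: "ww rr z (x - m *\<^sub>R y) p = ww rr z x p - m * ww rr z y p"
  unfolding ww_def by (simp add: sum_subtractf sum_distrib_left algebra_simps)

lemma Cs_form:
  fixes N g Z q :: real
  assumes N: "N > 0" and g: "-2 < g" "g < 2" and q: "q > 0"
  shows "Cs g Z q wp wq wr ep eq er rpq rpr rqr = 1/N * (hs g Z q wp wq ep eq rpq * (N/2*gam g Z q wr er)
     + hs g Z q wp wr ep er rpr * (N/2*gam g Z q wq eq) + hs g Z q wq wr eq er rqr * (N/2*gam g Z q wp ep)
     - 1/(N^2/(4*K2s g Z q)*g^2) * (N/2*gam g Z q wp ep) * (N/2*gam g Z q wq eq) * (N/2*gam g Z q wr er))"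
proof (cases "g = 0")
  case True thus ?thesis by (simp add: Cs_def gam_def)
next
  case False
  have Bp: "Bs g Z q > 0" by (rule Bs_pos[OF g q])
  have Ep: "Ef g Z q > 0" by (simp add: Ef_def)
  show ?thesis unfolding Cs_def gam_def K2s_def using N q Bp Ep False
    by (simp add: field_simps power2_eq_square power3_eq_cube)
qed

context
  fixes rr :: "'n::finite \<Rightarrow> 'n \<Rightarrow> real" and z :: 'n and gg :: real and R :: "real^'n"
  assumes sym: "\<forall>a\<in>UNIV - {z}. \<forall>b\<in>UNIV - {z}. rr a b = rr b a"
    and g1: "-2 < gg" and g2: "gg < 2" and qpos: "qf rr z R > 0"
begin

abbreviation "Z0 \<equiv> R$z"
abbreviation "q0 \<equiv> qf rr z R"
abbreviation "B0 \<equiv> Bs gg Z0 q0"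
abbreviation "E0 \<equiv> Ef gg Z0 q0"
abbreviation "w0 \<equiv> ww rr z R"
abbreviation "k0 \<equiv> gg / (q0 * B0)"

lemma B0_pos: "B0 > 0" by (rule Bs_pos[OF g1 g2 qpos])
lemma E0_pos: "E0 > 0" by (simp add: Ef_def)
lemma QQ0: "QQ rr z R = q0^2" using QQ_nonneg_pos[OF sym g1 g2 qpos] by (simp add: qf_QQ[OF sym g1 g2])

lemma gsum: "(\<Sum>q\<in>UNIV. metric rr z gg p q R * x$q) =
   E0 * (ww rr z x p + ee z p * x$z + k0 * (- Z0 * w0 p * (\<Sum>q\<in>UNIV. w0 q * x$q)
     + q0^2 * (w0 p * x$z + ee z p * (\<Sum>q\<in>UNIV. w0 q * x$q)) + q0^2 * (Z0 + gg*q0) * ee z p * x$z))"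
proof -
  define k where "k = gg / (q0 * B0)"
  define W where "W = (\<Sum>q\<in>UNIV. w0 q * x$q)"
  define al where "al = E0*ee z p + E0*k*q0^2*w0 p + E0*k*q0^2*(Z0+gg*q0)*ee z p"
  define be where "be = E0*k*(- Z0 * w0 p + q0^2 * ee z p)"
  have pw: "metric rr z gg p q R * x$q = E0*(rt rr z p q * x$q) + al*(ee z q * x$q) + be*(w0 q * x$q)" for q
    unfolding level2[OF sym g1 g2 qpos] rt_sym[OF sym, of q p] gs_def al_def be_def k_def[symmetric]
    by (simp add: algebra_simps)
  have "(\<Sum>q\<in>UNIV. metric rr z gg p q R * x$q) = E0*(\<Sum>q\<in>UNIV. rt rr z p q * x$q)
      + al*(\<Sum>q\<in>UNIV. ee z q * x$q) + be*(\<Sum>q\<in>UNIV. w0 q * x$q)"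
    unfolding pw by (simp only: sum.distrib flip: sum_distrib_left)
  also have "\<dots> = E0 * (ww rr z x p + ee z p * x$z + k * (- Z0 * w0 p * W
     + q0^2 * (w0 p * x$z + ee z p * W) + q0^2 * (Z0 + gg*q0) * ee z p * x$z))"
    unfolding sum_rt sum_e al_def be_def W_def[symmetric] by (simp add: algebra_simps)
  finally show ?thesis unfolding k_def W_def .
qed

lemma MR: "(\<Sum>q\<in>UNIV. metric rr z gg p q R * R$q) = Rls gg Z0 q0 (w0 p) (ee z p)"
proof -
  have B: "B0 = Z0^2 + gg*q0*Z0 + q0^2" by (simp add: Bs_def)
  show ?thesis unfolding gsum sum_wR QQ0 Rls_def using qpos B0_pos
    apply (simp add: field_simps)
    unfolding B by algebra
qed


lemma Me: "(\<Sum>q\<in>UNIV. metric rr z gg p q R * ee z q) = E0*(ee z p + k0*(q0^2 * w0 p + q0^2*(Z0+gg*q0)*ee z p))"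
proof -
  have "(\<Sum>q\<in>UNIV. metric rr z gg p q R * ee z q) = (\<Sum>q\<in>UNIV. metric rr z gg p q R * evec z $ q)"
    by (simp add: evec_def)
  also have "\<dots> = E0*(ee z p + k0*(q0^2 * w0 p + q0^2*(Z0+gg*q0)*ee z p))"
    unfolding gsum unfolding ww_evec evec_nth sum_we by (simp add: ee_def algebra_simps)
  finally show ?thesis .
qed

definition "lam0 = real CARD('n) * gg / (2 * E0 * q0 * B0)"
definition "cu0 p = lam0 * (- (Z0 + gg*q0) * R$p + B0 * ee z p)"
definition "c0 p = real CARD('n) / 2 * gam gg Z0 q0 (w0 p) (ee z p)"

lemma Mcu: "(\<Sum>q\<in>UNIV. metric rr z gg p q R * cu0 q) = c0 p"
proof -
  have "(\<Sum>q\<in>UNIV. metric rr z gg p q R * cu0 q) =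
     lam0 * (- (Z0 + gg*q0)) * (\<Sum>q\<in>UNIV. metric rr z gg p q R * R$q) + lam0 * B0 * (\<Sum>q\<in>UNIV. metric rr z gg p q R * ee z q)"
  proof -
    have pw: "metric rr z gg p q R * cu0 q = (lam0 * (- (Z0 + gg*q0))) * (metric rr z gg p q R * R$q)
       + (lam0 * B0) * (metric rr z gg p q R * ee z q)" for q
      unfolding cu0_def by (simp add: algebra_simps)
    show ?thesis unfolding pw by (simp only: sum.distrib flip: sum_distrib_left)
  qed
  also have "\<dots> = c0 p"
  proof -
    have B: "B0 = Z0^2 + gg*q0*Z0 + q0^2" by (simp add: Bs_def)
    show ?thesis unfolding MR Me c0_def lam0_def gam_def Rls_def using qpos B0_pos E0_pos
      apply (simp add: field_simps)
      unfolding B by algebra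
  qed
  finally show ?thesis .
qed


lemma det1: "(1 - k0*Z0*q0^2)*(1 + k0*q0^2*(Z0+gg*q0)) - k0^2*q0^6 = 1"
proof -
  have B: "B0 = Z0^2 + gg*q0*Z0 + q0^2" by (simp add: Bs_def)
  show ?thesis using qpos B0_pos
    apply (simp add: field_simps)
    unfolding B by algebra
qed

lemma M_inj:
  assumes posdef: "\<forall>v :: 'n \<Rightarrow> real. (\<exists>a\<in>UNIV - {z}. v a \<noteq> 0) \<longrightarrow>
                   (\<Sum>a\<in>UNIV - {z}. \<Sum>b\<in>UNIV - {z}. rr a b * v a * v b) > 0"
    and Mx: "\<forall>p. (\<Sum>q\<in>UNIV. metric rr z gg p q R * x$q) = 0"
  shows "x = 0"
proof -
  define W where "W = (\<Sum>q\<in>UNIV. w0 q * x$q)"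
  define xz where "xz = x$z"
  define k where "k = k0"
  have H: "ww rr z x p + ee z p * xz + k * (- Z0 * w0 p * W
     + q0^2 * (w0 p * xz + ee z p * W) + q0^2 * (Z0 + gg*q0) * ee z p * xz) = 0" for p
    using Mx[rule_format, of p] E0_pos unfolding gsum W_def[symmetric] xz_def[symmetric] k_def by simp
  define mu where "mu = - k * (q0^2 * xz - Z0 * W)"
  have Hp: "ww rr z x p = mu * w0 p" if "p \<noteq> z" for p
    using H[of p] that unfolding mu_def by (simp add: ee_def algebra_simps)
  define y where "y = x - mu *\<^sub>R R"
  have wy: "ww rr z y p = 0" for p
  proof (cases "p = z")
    case True thus ?thesis by (simp add: ww_def)
  next
    case False thus ?thesis unfolding y_def ww_lin Hp[OF False] by simp
  qed
  have y0: "y$a = 0" if "a \<noteq> z" for a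
  proof (rule ccontr)
    assume "y$a \<noteq> 0"
    hence "(\<Sum>a\<in>UNIV - {z}. \<Sum>b\<in>UNIV - {z}. rr a b * y$a * y$b) > 0"
      using posdef[rule_format, of "\<lambda>a. y$a"] that by auto
    moreover have "(\<Sum>a\<in>UNIV - {z}. \<Sum>b\<in>UNIV - {z}. rr a b * y$a * y$b) = (\<Sum>a\<in>UNIV - {z}. y$a * ww rr z y a)"
      by (intro sum.cong refl) (auto simp: ww_def sum_distrib_left intro!: sum.cong)
    ultimately show False using wy by simp
  qed
  have xa: "x$a = mu * R$a" if "a \<noteq> z" for a using y0[OF that] by (simp add: y_def)
  have "W = (\<Sum>q\<in>UNIV. w0 q * (mu * R$q))"
    unfolding W_def by (intro sum.cong refl) (metis ww_z xa mult_zero_left)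
  also have "\<dots> = mu * (\<Sum>q\<in>UNIV. w0 q * R$q)"
    by (subst sum_distrib_left) (simp add: algebra_simps)
  also have "\<dots> = mu * q0^2" using sum_wR[of rr z R] QQ0 by simp
  finally have Wm: "W = mu * q0^2" .
  have E1: "xz + k*(q0^2*(mu*q0^2) + q0^2*(Z0+gg*q0)*xz) = 0"
    using H[of z] unfolding Wm by (simp add: ee_def ww_z)
  have "mu + k*(q0^2*xz - Z0*W) = 0" unfolding mu_def by simp
  hence E2: "mu + k*(q0^2*xz - Z0*(mu*q0^2)) = 0" unfolding Wm .
  have D: "(1 - k*Z0*q0^2)*(1 + k*q0^2*(Z0+gg*q0)) - k^2*q0^6 = 1" unfolding k_def by (rule det1)
  have "mu = mu * ((1 - k*Z0*q0^2)*(1 + k*q0^2*(Z0+gg*q0)) - k^2*q0^6)" unfolding D by simp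
  also have "\<dots> = (1 + k*q0^2*(Z0+gg*q0)) * (mu + k*(q0^2*xz - Z0*(mu*q0^2)))
      - k*q0^2 * (xz + k*(q0^2*(mu*q0^2) + q0^2*(Z0+gg*q0)*xz))" by algebra
  finally have mu0: "mu = 0" unfolding E1 E2 by simp
  have "xz = xz * ((1 - k*Z0*q0^2)*(1 + k*q0^2*(Z0+gg*q0)) - k^2*q0^6)" unfolding D by simp
  also have "\<dots> = (1 - k*Z0*q0^2) * (xz + k*(q0^2*(mu*q0^2) + q0^2*(Z0+gg*q0)*xz))
      - k*q0^4 * (mu + k*(q0^2*xz - Z0*(mu*q0^2)))" by algebra
  finally have xz0: "xz = 0" unfolding E1 E2 by simp
  show "x = 0" unfolding vec_eq_iff
  proof
    fix a show "x$a = 0$a" using xz0 xa mu0 unfolding xz_def by (cases "a = z") auto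
  qed
qed


abbreviation "M0 \<equiv> gmat rr z gg R"
abbreviation "Gi \<equiv> ginv rr z gg R"

lemma M0_nth: "M0 $ p $ q = metric rr z gg p q R" by (simp add: gmat_def)

lemma M0_sym: "metric rr z gg p q R = metric rr z gg q p R"
  unfolding level2[OF sym g1 g2 qpos] rt_sym[OF sym, of q p] gs_def by (simp add: algebra_simps)

lemma M0_inv:
  assumes posdef: "\<forall>v :: 'n \<Rightarrow> real. (\<exists>a\<in>UNIV - {z}. v a \<noteq> 0) \<longrightarrow>
                   (\<Sum>a\<in>UNIV - {z}. \<Sum>b\<in>UNIV - {z}. rr a b * v a * v b) > 0"
  shows "M0 ** Gi = mat 1 \<and> Gi ** M0 = mat 1"
proof -
  have "\<forall>x. M0 *v x = 0 \<longrightarrow> x = 0"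
  proof (intro allI impI)
    fix x assume "M0 *v x = 0"
    hence "\<forall>p. (\<Sum>q\<in>UNIV. metric rr z gg p q R * x$q) = 0"
      by (auto simp: vec_eq_iff matrix_vector_mult_def M0_nth)
    thus "x = 0" by (rule M_inj[OF posdef])
  qed
  hence "\<exists>B. B ** M0 = mat 1" by (simp add: matrix_left_invertible_ker)
  hence "invertible M0" by (simp add: invertible_left_inverse)
  hence "\<exists>A'. M0 ** A' = mat 1 \<and> A' ** M0 = mat 1" by (simp add: invertible_def)
  thus ?thesis unfolding ginv_def matrix_inv_def by (rule someI_ex)
qed


lemma sum_ee: "(\<Sum>q\<in>UNIV. ee z q * ee z q) = 1"
  using sum_e[of z "evec z"] by (simp add: ee_def)

lemma RlCu: "(\<Sum>q\<in>UNIV. Rls gg Z0 q0 (w0 q) (ee z q) * cu0 q) = 0"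
proof -
  define a where "a = Z0 + gg*q0"
  have pw: "Rls gg Z0 q0 (w0 q) (ee z q) * cu0 q = (E0*lam0*(-a)) * (w0 q * R$q) + (E0*lam0*B0) * (w0 q * ee z q)
     + (E0*lam0*(-a)*a) * (ee z q * R$q) + (E0*lam0*a*B0) * (ee z q * ee z q)" for q
    unfolding Rls_def cu0_def a_def by (simp add: algebra_simps)
  have "(\<Sum>q\<in>UNIV. Rls gg Z0 q0 (w0 q) (ee z q) * cu0 q) = (E0*lam0*(-a)) * (\<Sum>q\<in>UNIV. w0 q * R$q)
     + (E0*lam0*B0) * (\<Sum>q\<in>UNIV. w0 q * ee z q)
     + (E0*lam0*(-a)*a) * (\<Sum>q\<in>UNIV. ee z q * R$q) + (E0*lam0*a*B0) * (\<Sum>q\<in>UNIV. ee z q * ee z q)"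
    unfolding pw by (simp only: sum.distrib flip: sum_distrib_left)
  also have "\<dots> = E0*lam0*a*(B0 - q0^2 - Z0*a)"
    unfolding sum_wR sum_we sum_e sum_ee QQ0 by (simp add: algebra_simps)
  also have "B0 - q0^2 - Z0*a = 0" unfolding a_def by (simp add: Bs_def algebra_simps power2_eq_square)
  finally show ?thesis by simp
qed

lemma RlR: "(\<Sum>q\<in>UNIV. Rls gg Z0 q0 (w0 q) (ee z q) * R$q) = K2s gg Z0 q0"
proof -
  have pw: "Rls gg Z0 q0 (w0 q) (ee z q) * R$q = E0 * (w0 q * R$q) + (E0*(Z0 + gg*q0)) * (ee z q * R$q)" for q
    unfolding Rls_def by (simp add: algebra_simps)
  have "(\<Sum>q\<in>UNIV. Rls gg Z0 q0 (w0 q) (ee z q) * R$q) = E0 * (\<Sum>q\<in>UNIV. w0 q * R$q)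
     + (E0*(Z0 + gg*q0)) * (\<Sum>q\<in>UNIV. ee z q * R$q)"
    unfolding pw by (simp only: sum.distrib flip: sum_distrib_left)
  also have "\<dots> = K2s gg Z0 q0"
    unfolding sum_wR sum_e QQ0 K2s_def by (simp add: Bs_def algebra_simps power2_eq_square)
  finally show ?thesis .
qed

lemma ccu: "(\<Sum>q\<in>UNIV. c0 q * cu0 q) = (real CARD('n))^2 / (4 * K2s gg Z0 q0) * gg^2"
proof -
  define a where "a = Z0 + gg*q0"
  define m where "m = real CARD('n) / 2 * (gg / (q0 * B0))"
  have pw: "c0 q * cu0 q = (m*lam0*q0^2*(-a)) * (ee z q * R$q) + (m*lam0*q0^2*B0) * (ee z q * ee z q)
     + (m*lam0*Z0*a) * (w0 q * R$q) + (- m*lam0*Z0*B0) * (w0 q * ee z q)" for q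
  proof -
    have c0q: "c0 q = m * (q0^2 * ee z q - Z0 * w0 q)" by (simp add: c0_def gam_def m_def)
    show ?thesis unfolding c0q cu0_def a_def by (simp add: algebra_simps)
  qed
  have "(\<Sum>q\<in>UNIV. c0 q * cu0 q) = (m*lam0*q0^2*(-a)) * (\<Sum>q\<in>UNIV. ee z q * R$q)
     + (m*lam0*q0^2*B0) * (\<Sum>q\<in>UNIV. ee z q * ee z q)
     + (m*lam0*Z0*a) * (\<Sum>q\<in>UNIV. w0 q * R$q) + (- m*lam0*Z0*B0) * (\<Sum>q\<in>UNIV. w0 q * ee z q)"
    unfolding pw by (simp only: sum.distrib flip: sum_distrib_left)
  also have "\<dots> = m*lam0*q0^2*B0"
    unfolding sum_wR sum_we sum_e sum_ee QQ0 by (simp add: algebra_simps)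
  also have "\<dots> = (real CARD('n))^2 / (4 * K2s gg Z0 q0) * gg^2"
    unfolding m_def lam0_def K2s_def using qpos B0_pos E0_pos by (simp add: field_simps power2_eq_square)
  finally show ?thesis .
qed

lemma Rlow_eq: "Rlow rr z gg p R = Rls gg Z0 q0 (w0 p) (ee z p)"
  unfolding Rlow_def level1[OF sym g1 g2 qpos] by simp

lemma angular_eq: "angular rr z gg p q R = hs gg Z0 q0 (w0 p) (w0 q) (ee z p) (ee z q) (rt rr z p q)"
  unfolding angular_def Rlow_eq K2_eq[OF sym g1 g2 qpos] level2[OF sym g1 g2 qpos] hs_def rt_sym[OF sym, of q p] ..

context
  assumes posdef: "\<forall>v :: 'n \<Rightarrow> real. (\<exists>a\<in>UNIV - {z}. v a \<noteq> 0) \<longrightarrow>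
                   (\<Sum>a\<in>UNIV - {z}. \<Sum>b\<in>UNIV - {z}. rr a b * v a * v b) > 0"
begin

lemma Gi_sym: "Gi $ q $ r = Gi $ r $ q"
proof -
  have tM: "transpose M0 = M0" by (simp add: vec_eq_iff transpose_def M0_nth M0_sym)
  have "transpose (M0 ** Gi) = mat 1" using M0_inv[OF posdef] by simp
  hence L: "transpose Gi ** M0 = mat 1" by (simp add: matrix_transpose_mul tM)
  have "transpose Gi = transpose Gi ** (M0 ** Gi)" using M0_inv[OF posdef] by simp
  also have "\<dots> = Gi" by (simp add: matrix_mul_assoc L)
  finally have "transpose Gi = Gi" .
  hence "transpose Gi $ q $ r = Gi $ q $ r" by simp
  thus ?thesis by (simp add: transpose_def)
qed

lemma Gi_apply:
  assumes "\<forall>p. (\<Sum>q\<in>UNIV. metric rr z gg p q R * y q) = v p"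
  shows "(\<Sum>r\<in>UNIV. Gi $ q $ r * v r) = y q"
proof -
  define yv where "yv = (\<chi> q. y q)"
  have "M0 *v yv = (\<chi> p. v p)" using assms by (simp add: vec_eq_iff matrix_vector_mult_def M0_nth yv_def)
  hence "Gi *v (\<chi> p. v p) = Gi *v (M0 *v yv)" by simp
  also have "\<dots> = yv" using M0_inv[OF posdef] by (simp add: matrix_vector_mul_assoc)
  finally have "(Gi *v (\<chi> p. v p)) $ q = yv $ q" by simp
  thus ?thesis by (simp add: matrix_vector_mult_def yv_def)
qed

lemma Gi_trace: "(\<Sum>q\<in>UNIV. \<Sum>r\<in>UNIV. Gi $ q $ r * metric rr z gg q r R) = real CARD('n)"
proof -
  have "(\<Sum>r\<in>UNIV. Gi $ q $ r * metric rr z gg q r R) = (Gi ** M0) $ q $ q" for q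
    by (simp add: matrix_matrix_mult_def M0_nth M0_sym[of q])
  hence "(\<Sum>r\<in>UNIV. Gi $ q $ r * metric rr z gg q r R) = 1" for q using M0_inv[OF posdef] by (simp add: mat_def)
  thus ?thesis by simp
qed


lemma K0_pos: "K2s gg Z0 q0 > 0" unfolding K2s_def using B0_pos E0_pos by simp

lemma cartan_form: "cartan rr z gg p q r R = 1 / real CARD('n) *
   (angular rr z gg p q R * c0 r + angular rr z gg p r R * c0 q + angular rr z gg q r R * c0 p
    - 1 / ((real CARD('n))^2 / (4 * K2s gg Z0 q0) * gg^2) * c0 p * c0 q * c0 r)"
  unfolding level3[OF sym g1 g2 qpos] angular_eq c0_def rt_sym[OF sym, of q p]
  by (rule Cs_form[OF _ g1 g2 qpos]) simp

lemma hA: "angular rr z gg p q R = metric rr z gg p q R - Rls gg Z0 q0 (w0 p) (ee z p) * Rls gg Z0 q0 (w0 q) (ee z q) / K2s gg Z0 q0"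
  unfolding angular_def Rlow_eq K2_eq[OF sym g1 g2 qpos] ..

lemma Gc: "(\<Sum>r\<in>UNIV. Gi $ q $ r * c0 r) = cu0 q"
  by (rule Gi_apply) (simp add: Mcu)

lemma GR: "(\<Sum>r\<in>UNIV. Gi $ q $ r * Rls gg Z0 q0 (w0 r) (ee z r)) = R $ q"
  by (rule Gi_apply) (simp add: MR)

lemma S1: "(\<Sum>q\<in>UNIV. angular rr z gg p q R * cu0 q) = c0 p"
proof -
  define K where "K = K2s gg Z0 q0"
  have pw: "angular rr z gg p q R * cu0 q = metric rr z gg p q R * cu0 q
     - (Rls gg Z0 q0 (w0 p) (ee z p) / K) * (Rls gg Z0 q0 (w0 q) (ee z q) * cu0 q)" for q
    unfolding hA K_def[symmetric] by (simp add: algebra_simps)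
  show ?thesis unfolding pw sum_subtractf sum_distrib_left[symmetric] Mcu RlCu by simp
qed

lemma S3: "(\<Sum>q\<in>UNIV. \<Sum>r\<in>UNIV. Gi $ q $ r * angular rr z gg q r R) = real CARD('n) - 1"
proof -
  define K where "K = K2s gg Z0 q0"
  have pw: "Gi $ q $ r * angular rr z gg q r R = Gi $ q $ r * metric rr z gg q r R
     - (Rls gg Z0 q0 (w0 q) (ee z q) / K) * (Gi $ q $ r * Rls gg Z0 q0 (w0 r) (ee z r))" for q r
    unfolding hA K_def[symmetric] by (simp add: algebra_simps)
  have "(\<Sum>q\<in>UNIV. \<Sum>r\<in>UNIV. Gi $ q $ r * angular rr z gg q r R) =
     (\<Sum>q\<in>UNIV. \<Sum>r\<in>UNIV. Gi $ q $ r * metric rr z gg q r R) - (\<Sum>q\<in>UNIV. Rls gg Z0 q0 (w0 q) (ee z q) / K * R$q)"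
    unfolding pw sum_subtractf sum_distrib_left[symmetric] GR ..
  also have "(\<Sum>q\<in>UNIV. Rls gg Z0 q0 (w0 q) (ee z q) / K * R$q) = (\<Sum>q\<in>UNIV. Rls gg Z0 q0 (w0 q) (ee z q) * R$q) / K"
    by (simp add: sum_divide_distrib)
  also have "\<dots> = 1" unfolding RlR K_def using K0_pos by simp
  finally show ?thesis unfolding Gi_trace .
qed

lemma Clow_eq: "Clow rr z gg p R = c0 p"
proof -
  define N where "N = real CARD('n)"
  define ka where "ka = 1 / ((real CARD('n))^2 / (4 * K2s gg Z0 q0) * gg^2)"
  define h where "h = (\<lambda>p q. angular rr z gg p q R)"
  have inner: "(\<Sum>r\<in>UNIV. Gi $ q $ r * cartan rr z gg p q r R) =
     (1/N * h p q) * cu0 q + 1/N * (\<Sum>r\<in>UNIV. h p r * (Gi $ q $ r * c0 q))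
     + (1/N * c0 p) * (\<Sum>r\<in>UNIV. Gi $ q $ r * h q r) + (- (1/N) * ka * c0 p * c0 q) * cu0 q" for q
  proof -
    have pw: "Gi $ q $ r * cartan rr z gg p q r R = (1/N * h p q) * (Gi $ q $ r * c0 r) + 1/N * (h p r * (Gi $ q $ r * c0 q))
      + (1/N * c0 p) * (Gi $ q $ r * h q r) + (- (1/N) * ka * c0 p * c0 q) * (Gi $ q $ r * c0 r)" for r
      unfolding cartan_form ka_def[symmetric] unfolding N_def[symmetric] h_def by (simp add: algebra_simps)
    show ?thesis unfolding pw by (simp only: sum.distrib flip: sum_distrib_left Gc)
  qed
  have mid: "(\<Sum>q\<in>UNIV. \<Sum>r\<in>UNIV. h p r * (Gi $ q $ r * c0 q)) = c0 p"
  proof -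
    have "(\<Sum>q\<in>UNIV. \<Sum>r\<in>UNIV. h p r * (Gi $ q $ r * c0 q)) = (\<Sum>r\<in>UNIV. \<Sum>q\<in>UNIV. h p r * (Gi $ q $ r * c0 q))"
      by (rule sum.swap)
    also have "\<dots> = (\<Sum>r\<in>UNIV. h p r * (\<Sum>q\<in>UNIV. Gi $ r $ q * c0 q))"
      unfolding sum_distrib_left by (intro sum.cong refl) (metis Gi_sym)
    also have "\<dots> = c0 p" unfolding Gc h_def S1 ..
    finally show ?thesis .
  qed
  have "Clow rr z gg p R = (\<Sum>q\<in>UNIV. \<Sum>r\<in>UNIV. Gi $ q $ r * cartan rr z gg p q r R)"
    unfolding Clow_def ..
  also have "\<dots> = 1/N * (\<Sum>q\<in>UNIV. h p q * cu0 q) + 1/N * (\<Sum>q\<in>UNIV. \<Sum>r\<in>UNIV. h p r * (Gi $ q $ r * c0 q))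
     + (1/N * c0 p) * (\<Sum>q\<in>UNIV. \<Sum>r\<in>UNIV. Gi $ q $ r * h q r) - (1/N) * ka * c0 p * (\<Sum>q\<in>UNIV. c0 q * cu0 q)"
    unfolding inner by (simp add: sum.distrib sum_distrib_left sum_subtractf algebra_simps)
  also have "\<dots> = 1/N * c0 p + 1/N * c0 p + (1/N * c0 p) * (N - 1) - (1/N) * ka * c0 p * (\<Sum>q\<in>UNIV. c0 q * cu0 q)"
    unfolding mid unfolding h_def S1 S3 N_def ..
  also have "\<dots> = c0 p"
  proof (cases "gg = 0")
    case True
    have "c0 p = 0" unfolding c0_def gam_def using True by simp
    thus ?thesis by simp
  next
    case False
    have "ka * (\<Sum>q\<in>UNIV. c0 q * cu0 q) = 1" unfolding ccu ka_def using False K0_pos by simp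
    moreover have "N > 0" unfolding N_def by simp
    ultimately show ?thesis by (simp add: field_simps)
  qed
  finally show ?thesis .
qed

lemma Cup_eq: "Cup rr z gg p R = cu0 p"
  unfolding Cup_def Clow_eq ginv_def[symmetric] by (rule Gc)

end

end


theorem theorem2p1:
  fixes rr :: "'n::finite \<Rightarrow> 'n \<Rightarrow> real" and z :: 'n and gg :: real and R :: "real^'n"
  assumes N2: "CARD('n) \<ge> 2"
    and sym: "\<forall>a\<in>UNIV - {z}. \<forall>b\<in>UNIV - {z}. rr a b = rr b a"
    and posdef: "\<forall>v :: 'n \<Rightarrow> real. (\<exists>a\<in>UNIV - {z}. v a \<noteq> 0) \<longrightarrow>
                   (\<Sum>a\<in>UNIV - {z}. \<Sum>b\<in>UNIV - {z}. rr a b * v a * v b) > 0"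
    and g_range: "-2 < gg" "gg < 2"
    and q_pos: "qf rr z R > 0"
  shows "(\<Sum>t\<in>UNIV. Clow rr z gg t R * Cup rr z gg t R)
           = (real CARD('n))^2 / (4 * (Kf rr z gg R)^2) * gg^2
         \<and> (gg \<noteq> 0 \<longrightarrow> (\<forall>p q r. cartan rr z gg p q r R =
           1 / real CARD('n) *
             (angular rr z gg p q R * Clow rr z gg r R
              + angular rr z gg p r R * Clow rr z gg q R
              + angular rr z gg q r R * Clow rr z gg p R
              - 1 / (\<Sum>s\<in>UNIV. Clow rr z gg s R * Cup rr z gg s R)
                  * Clow rr z gg p R * Clow rr z gg q R * Clow rr z gg r R)))"
proof -
  note ctx = sym g_range(1) g_range(2) q_pos
  have CL: "Clow rr z gg t R = c0 rr z gg R t" for t by (rule Clow_eq[OF ctx posdef])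
  have CU: "Cup rr z gg t R = cu0 rr z gg R t" for t by (rule Cup_eq[OF ctx posdef])
  have K: "(Kf rr z gg R)^2 = K2s gg (R$z) (qf rr z R)" by (rule K2_eq[OF sym g_range q_pos])
  have S: "(\<Sum>t\<in>UNIV. Clow rr z gg t R * Cup rr z gg t R)
           = (real CARD('n))^2 / (4 * (Kf rr z gg R)^2) * gg^2"
    unfolding CL CU K by (rule ccu[OF ctx])
  show ?thesis
  proof (intro conjI impI allI)
    show "(\<Sum>t\<in>UNIV. Clow rr z gg t R * Cup rr z gg t R)
           = (real CARD('n))^2 / (4 * (Kf rr z gg R)^2) * gg^2" by (rule S)
    fix p q r
    show "cartan rr z gg p q r R =
           1 / real CARD('n) *
             (angular rr z gg p q R * Clow rr z gg r R
              + angular rr z gg p r R * Clow rr z gg q R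
              + angular rr z gg q r R * Clow rr z gg p R
              - 1 / (\<Sum>s\<in>UNIV. Clow rr z gg s R * Cup rr z gg s R)
                  * Clow rr z gg p R * Clow rr z gg q R * Clow rr z gg r R)"
      unfolding S unfolding CL K by (rule cartan_form[OF ctx posdef])
  qed
qed

end
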